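(* If $\delta=x^{\mathbf d}f(\theta)$ is a homogeneous differential operator on $R$ of degree $\mathbf d$ with $-\mathbf d$ in the interior of $\sigma^\vee$, then $\delta$ fixes at most one nonzero monomial ideal of $R$.
   Context: Let $\sigma\subseteq\mathbb R^d$ be a full-dimensional, strongly convex rational polyhedral cone, $S=\sigma^\vee\cap\mathbb Z^d$, $R=\mathbb C[S]$ with monomial basis $x^{\mathbf a}$, $\mathbf a\in S$. Let $h_1,\dots,h_n$ be the primitive support functions of the facets of $\sigma^\vee$. $(g,m)!=\prod_{j=0}^m(g-j)$ for $m\ge0$, $=1$ for $m<0$; $H_{\mathbf d}=\prod_i(h_i,h_i(-\mathbf d)-1)!$. For $f\in\mathbb C[t_1,\dots,t_d]$ divisible by $H_{\mathbf d}$, $\delta=x^{\mathbf d}f(\theta)$ is the $\mathbb C$-linear map $R\to R$ with $\delta(x^{\mathbf a})=f(\mathbf a)x^{\mathbf a+\mathbf d}$. An ideal $I$ is $\delta$-fixed if $\delta(I)=I$. *)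

theory Defs
  imports "HOL-Analysis.Analysis" "HOL-Library.Poly_Mapping"
begin

definition rvec :: "int^'n \<Rightarrow> real^'n" where
  "rvec a = (\<chi> i. of_int (a $ i))"

definition rat_poly_cone :: "(real^'n) set \<Rightarrow> bool" where
  "rat_poly_cone \<sigma> \<longleftrightarrow> (\<exists>V :: (int^'n) set. finite V \<and>
     \<sigma> = {\<Sum>v\<in>V. c v *\<^sub>R rvec v | c. \<forall>v\<in>V. c v \<ge> 0})"

definition strongly_convex :: "(real^'n) set \<Rightarrow> bool" where
  "strongly_convex \<sigma> \<longleftrightarrow> \<sigma> \<inter> uminus ` \<sigma> = {0}"

definition dualc :: "(real^'n) set \<Rightarrow> (real^'n) set" where
  "dualc \<sigma> = {u. \<forall>v\<in>\<sigma>. 0 \<le> u \<bullet> v}"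

definition sgrp :: "(real^'n) set \<Rightarrow> (int^'n) set" where
  "sgrp \<sigma> = {a. rvec a \<in> dualc \<sigma>}"

definition primitive :: "int^'n \<Rightarrow> bool" where
  "primitive h \<longleftrightarrow> (\<forall>(k::int) g. h = k *s g \<longrightarrow> k = 1 \<or> k = -1)"

definition is_prim_supp :: "(real^'n) set \<Rightarrow> (real^'n) set \<Rightarrow> int^'n \<Rightarrow> bool" where
  "is_prim_supp \<sigma> F h \<longleftrightarrow> primitive h \<and> (\<forall>u\<in>dualc \<sigma>. 0 \<le> rvec h \<bullet> u)
      \<and> F = {u\<in>dualc \<sigma>. rvec h \<bullet> u = 0}"

definition prim_supp :: "(real^'n) set \<Rightarrow> (real^'n) set \<Rightarrow> int^'n" where
  "prim_supp \<sigma> F = (THE h. is_prim_supp \<sigma> F h)"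

definition ipair :: "int^'n \<Rightarrow> int^'n \<Rightarrow> int" where
  "ipair h a = (\<Sum>i\<in>UNIV. h $ i * a $ i)"

type_synonym 'n cpoly = "('n \<Rightarrow>\<^sub>0 nat) \<Rightarrow>\<^sub>0 complex"

definition pconst :: "complex \<Rightarrow> 'n cpoly" where
  "pconst c = Poly_Mapping.single 0 c"

definition pvar :: "'n \<Rightarrow> 'n cpoly" where
  "pvar k = Poly_Mapping.single (Poly_Mapping.single k 1) 1"

definition plin :: "int^'n \<Rightarrow> 'n::finite cpoly" where
  "plin h = (\<Sum>k\<in>UNIV. pconst (of_int (h $ k)) * pvar k)"

definition pfall :: "'n cpoly \<Rightarrow> int \<Rightarrow> 'n cpoly" where
  "pfall g m = (if m < 0 then 1 else (\<Prod>j\<in>{0..nat m}. g - pconst (of_nat j)))"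

definition Hd :: "(real^'n) set \<Rightarrow> int^'n \<Rightarrow> 'n::finite cpoly" where
  "Hd \<sigma> d = (\<Prod>F\<in>{F. F facet_of dualc \<sigma>}.
      pfall (plin (prim_supp \<sigma> F)) (ipair (prim_supp \<sigma> F) (-d) - 1))"

definition peval :: "'n cpoly \<Rightarrow> ('n \<Rightarrow> complex) \<Rightarrow> complex" where
  "peval f t = (\<Sum>m\<in>Poly_Mapping.keys f. Poly_Mapping.lookup f m * (\<Prod>i\<in>Poly_Mapping.keys m. t i ^ Poly_Mapping.lookup m i))"

type_synonym 'n gring = "(int^'n) \<Rightarrow>\<^sub>0 complex"

definition Rng :: "(real^'n) set \<Rightarrow> 'n gring set" where
  "Rng \<sigma> = {p. Poly_Mapping.keys p \<subseteq> sgrp \<sigma>}"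

definition xmon :: "int^'n \<Rightarrow> 'n gring" where
  "xmon a = Poly_Mapping.single a 1"

definition is_ideal :: "(real^'n) set \<Rightarrow> 'n gring set \<Rightarrow> bool" where
  "is_ideal \<sigma> I \<longleftrightarrow> I \<subseteq> Rng \<sigma> \<and> 0 \<in> I \<and> (\<forall>x\<in>I. \<forall>y\<in>I. x + y \<in> I \<and> x - y \<in> I)
      \<and> (\<forall>r\<in>Rng \<sigma>. \<forall>x\<in>I. r * x \<in> I)"

definition gen_ideal :: "(real^'n) set \<Rightarrow> 'n gring set \<Rightarrow> 'n gring set" where
  "gen_ideal \<sigma> G = \<Inter>{J. is_ideal \<sigma> J \<and> G \<subseteq> J}"

definition monomial_ideal :: "(real^'n) set \<Rightarrow> 'n gring set \<Rightarrow> bool" where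
  "monomial_ideal \<sigma> I \<longleftrightarrow> (\<exists>A \<subseteq> sgrp \<sigma>. I = gen_ideal \<sigma> (xmon ` A))"

text \<open>delta = x^d f(theta): the linear map with x^a \<mapsto> f(a) x^(a+d)\<close>
definition delta :: "int^'n \<Rightarrow> 'n cpoly \<Rightarrow> 'n gring \<Rightarrow> 'n gring" where
  "delta d f p = (\<Sum>a\<in>Poly_Mapping.keys p. Poly_Mapping.single (a + d)
      (Poly_Mapping.lookup p a * peval f (\<lambda>i. of_int (a $ i))))"

end

theory Submission
  imports Defs
begin

lemma rvec_add: "rvec (a + b) = rvec a + rvec b"
  by (simp add: rvec_def vec_eq_iff)
lemma rvec_zero: "rvec 0 = 0"
  by (simp add: rvec_def vec_eq_iff)

lemma dualc_add: "u \<in> dualc \<sigma> \<Longrightarrow> v \<in> dualc \<sigma> \<Longrightarrow> u + v \<in> dualc \<sigma>"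
  by (auto simp: dualc_def inner_add_left)
lemma dualc_scale: "u \<in> dualc \<sigma> \<Longrightarrow> 0 \<le> t \<Longrightarrow> t *\<^sub>R u \<in> dualc \<sigma>"
  by (auto simp: dualc_def)

lemma sgrp_add: "a \<in> sgrp \<sigma> \<Longrightarrow> b \<in> sgrp \<sigma> \<Longrightarrow> a + b \<in> sgrp \<sigma>"
  by (simp add: sgrp_def rvec_add dualc_add)
lemma sgrp_zero: "0 \<in> sgrp \<sigma>"
  by (simp add: sgrp_def rvec_zero dualc_def)

lemma sum_monos: "p = (\<Sum>k\<in>Poly_Mapping.keys p. Poly_Mapping.single k (Poly_Mapping.lookup p k))"
proof (rule poly_mapping_eqI)
  fix x
  show "Poly_Mapping.lookup p x = Poly_Mapping.lookup (\<Sum>k\<in>Poly_Mapping.keys p. Poly_Mapping.single k (Poly_Mapping.lookup p k)) x"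
    by (simp add: lookup_sum lookup_single when_def in_keys_iff)
qed

definition upset :: "(real^'n) set \<Rightarrow> (int^'n) set \<Rightarrow> bool" where
  "upset \<sigma> U \<longleftrightarrow> U \<subseteq> sgrp \<sigma> \<and> (\<forall>u\<in>U. \<forall>s\<in>sgrp \<sigma>. u + s \<in> U)"

lemma upset_ideal:
  fixes \<sigma> :: "(real^'n) set"
  assumes "upset \<sigma> U"
  shows "is_ideal \<sigma> {p :: 'n gring. Poly_Mapping.keys p \<subseteq> U}"
proof -
  note sub = keys_diff
  have mul: "Poly_Mapping.keys (r * x) \<subseteq> U" if "Poly_Mapping.keys r \<subseteq> sgrp \<sigma>" "Poly_Mapping.keys x \<subseteq> U" for r x :: "'n gring"
  proof
    fix z assume "z \<in> Poly_Mapping.keys (r * x)"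
    then obtain a b where "z = a + b" "a \<in> Poly_Mapping.keys r" "b \<in> Poly_Mapping.keys x" using keys_mult by blast
    thus "z \<in> U" using that assms unfolding upset_def by (metis add.commute subsetD)
  qed
  let ?P = "{p :: 'n gring. Poly_Mapping.keys p \<subseteq> U}"
  let ?R = "{p :: 'n gring. Poly_Mapping.keys p \<subseteq> sgrp \<sigma>}"
  have U: "U \<subseteq> sgrp \<sigma>" using assms upset_def by blast
  show ?thesis unfolding is_ideal_def Rng_def
  proof (intro conjI ballI)
    show "?P \<subseteq> ?R" using U by auto
    show "0 \<in> ?P" by simp
  next
    fix x y assume "x \<in> ?P" "y \<in> ?P"
    then show "x + y \<in> ?P" "x - y \<in> ?P"
      using keys_add[of x y] sub[of x y] by auto
  next
    fix r x assume "r \<in> ?R" "x \<in> ?P"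
    then show "r * x \<in> ?P" using mul by auto
  qed
qed

lemma monomial_ideal_char:
  fixes \<sigma> :: "(real^'n) set"
  assumes "monomial_ideal \<sigma> I"
  shows "\<exists>U. upset \<sigma> U \<and> I = {p. Poly_Mapping.keys p \<subseteq> U}"
proof -
  obtain A where A: "A \<subseteq> sgrp \<sigma>" "I = gen_ideal \<sigma> (xmon ` A)"
    using assms unfolding monomial_ideal_def by blast
  define U where "U = {a + s | a s. a \<in> A \<and> s \<in> sgrp \<sigma>}"
  have up: "upset \<sigma> U" unfolding upset_def U_def
    using A(1) by (auto intro!: sgrp_add simp: add.assoc) (metis add.assoc sgrp_add)+
  have "gen_ideal \<sigma> (xmon ` A) = {p. Poly_Mapping.keys p \<subseteq> U}"
  proof
    have "xmon a \<in> {p. Poly_Mapping.keys p \<subseteq> U}" if "a \<in> A" for a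
      using that sgrp_zero by (force simp: xmon_def U_def)
    thus "gen_ideal \<sigma> (xmon ` A) \<subseteq> {p. Poly_Mapping.keys p \<subseteq> U}"
      unfolding gen_ideal_def using upset_ideal[OF up] by blast
  next
    show "{p. Poly_Mapping.keys p \<subseteq> U} \<subseteq> gen_ideal \<sigma> (xmon ` A)"
      unfolding gen_ideal_def
    proof (intro subsetI InterI, simp, elim conjE)
      fix p :: "'n gring" and J assume p: "Poly_Mapping.keys p \<subseteq> U" and J: "is_ideal \<sigma> J" "xmon ` A \<subseteq> J"
      have one: "Poly_Mapping.single k c \<in> J" if kU: "k \<in> U" for k c
      proof -
        obtain a s where as: "k = a + s" "a \<in> A" "s \<in> sgrp \<sigma>" using kU unfolding U_def by blast
        have "Poly_Mapping.single s c \<in> Rng \<sigma>" using as by (simp add: Rng_def)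
        moreover have "xmon a \<in> J" using J as by blast
        ultimately have "Poly_Mapping.single s c * xmon a \<in> J" using J(1) unfolding is_ideal_def by blast
        thus ?thesis by (simp add: xmon_def mult_single as add.commute)
      qed
      have "(\<Sum>k\<in>K. Poly_Mapping.single k (Poly_Mapping.lookup p k)) \<in> J" if "finite K" "K \<subseteq> U" for K
        using that
      proof (induction K rule: finite_induct)
        case empty then show ?case using J(1) by (simp add: is_ideal_def)
      next
        case (insert x F) then show ?case using J(1) one unfolding is_ideal_def by simp
      qed
      then show "p \<in> J" using p by (metis sum_monos finite_keys)
    qed
  qed
  thus ?thesis using up A by blast
qed

lemma delta_xmon: "delta d f (xmon b) = Poly_Mapping.single (b + d) (peval f (\<lambda>i. of_int (b $ i)))"
  by (simp add: delta_def xmon_def)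

lemma lookup_delta: "Poly_Mapping.lookup (delta d f g) a =
   Poly_Mapping.lookup g (a - d) * peval f (\<lambda>i. of_int ((a - d) $ i))"
proof -
  have "Poly_Mapping.lookup (delta d f g) a = (\<Sum>b\<in>Poly_Mapping.keys g.
     (if b = a - d then Poly_Mapping.lookup g b * peval f (\<lambda>i. of_int (b $ i)) else 0))"
    unfolding delta_def lookup_sum by (intro sum.cong) (auto simp: lookup_single when_def)
  also have "\<dots> = Poly_Mapping.lookup g (a - d) * peval f (\<lambda>i. of_int ((a - d) $ i))"
    by (simp add: in_keys_iff)
  finally show ?thesis .
qed

lemma interior_shift:
  assumes "rvec (-d) \<in> interior (dualc \<sigma>)"
  shows "\<exists>k::nat. rvec (a + of_nat k *s (-d)) \<in> dualc \<sigma>"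
proof -
  obtain e where e: "e > 0" "ball (rvec (-d)) e \<subseteq> dualc \<sigma>"
    using assms by (meson mem_interior)
  obtain k :: nat where k: "norm (rvec a) / e < real k" using reals_Archimedean2 by blast
  have kpos: "real k > 0" using k e by (smt (verit) divide_nonneg_pos norm_ge_zero)
  have "dist (rvec (-d)) (rvec (-d) + (1 / real k) *\<^sub>R rvec a) = norm (rvec a) / real k"
    using kpos by (simp add: dist_norm)
  also have "\<dots> < e" using k kpos e by (simp add: field_simps)
  finally have "rvec (-d) + (1 / real k) *\<^sub>R rvec a \<in> dualc \<sigma>" using e by auto
  from dualc_scale[OF this, of "real k"] kpos
  have "real k *\<^sub>R rvec (-d) + rvec a \<in> dualc \<sigma>" by (simp add: scaleR_add_right)
  moreover have "rvec (a + of_nat k *s (-d)) = real k *\<^sub>R rvec (-d) + rvec a"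
    by (simp add: rvec_def vec_eq_iff)
  ultimately show ?thesis by metis
qed

lemma smul_suc: "a - of_nat (Suc m) *s d = (a - of_nat m *s d) - (d :: int^'n)"
  by (simp add: vec_eq_iff algebra_simps)

lemma key_incl:
  fixes \<sigma> :: "(real^'n) set" and d :: "int^'n" and f :: "'n cpoly"
  assumes int: "rvec (-d) \<in> interior (dualc \<sigma>)"
    and uU: "upset \<sigma> U" and uV: "upset \<sigma> V"
    and I: "I = {p. Poly_Mapping.keys p \<subseteq> U}" and J: "J = {p. Poly_Mapping.keys p \<subseteq> V}"
    and fI: "delta d f ` I = I" and fJ: "delta d f ` J = J" and ne: "c \<in> U"
  shows "V \<subseteq> U"
proof
  fix a assume aV: "a \<in> V"
  define ev where "ev b = peval f (\<lambda>i. of_int (b $ i))" for b :: "int^'n"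
  have F1: "b - d \<in> V \<and> ev (b - d) \<noteq> 0" if "b \<in> V" for b
  proof -
    have "xmon b \<in> J" using that J by (simp add: xmon_def)
    then obtain g where g: "g \<in> J" "delta d f g = xmon b" using fJ by (metis imageE)
    have "Poly_Mapping.lookup g (b - d) * ev (b - d) = 1"
      using arg_cong[OF g(2), of "\<lambda>p. Poly_Mapping.lookup p b"]
      by (simp add: lookup_delta ev_def xmon_def lookup_single)
    hence "Poly_Mapping.lookup g (b - d) \<noteq> 0" "ev (b - d) \<noteq> 0" by auto
    thus ?thesis using g(1) J by (auto simp: in_keys_iff)
  qed
  have F2: "b + d \<in> U" if "b \<in> U" "ev b \<noteq> 0" for b
  proof -
    have "xmon b \<in> I" using that I by (simp add: xmon_def)
    hence "delta d f (xmon b) \<in> I" using fI by blast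
    thus ?thesis using that I by (simp add: delta_xmon ev_def)
  qed
  have chain: "a - of_nat m *s d \<in> V \<and> (m \<ge> 1 \<longrightarrow> ev (a - of_nat m *s d) \<noteq> 0)" for m
  proof (induction m)
    case 0 then show ?case using aV by simp
  next
    case (Suc m) then show ?case using F1[of "a - of_nat m *s d"] by (simp only: smul_suc) simp
  qed
  obtain k :: nat where k: "rvec ((a - c) + of_nat k *s (-d)) \<in> dualc \<sigma>"
    using interior_shift[OF int] by blast
  have "(a - c) + of_nat k *s (-d) \<in> sgrp \<sigma>" using k by (simp add: sgrp_def)
  hence "c + ((a - c) + of_nat k *s (-d)) \<in> U" using uU ne unfolding upset_def by blast
  moreover have "c + ((a - c) + of_nat k *s (-d)) = a - of_nat k *s d"
    by (simp add: vec_eq_iff algebra_simps)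
  ultimately have start: "a - of_nat k *s d \<in> U" by simp
  have down: "a - of_nat (k - j) *s d \<in> U" if "j \<le> k" for j
    using that
  proof (induction j)
    case 0 then show ?case using start by simp
  next
    case (Suc j)
    then have m: "k - j = Suc (k - Suc j)" by simp
    have "a - of_nat (k - j) *s d \<in> U" using Suc by simp
    moreover have "ev (a - of_nat (k - j) *s d) \<noteq> 0" using chain[of "k - j"] m by simp
    ultimately have "(a - of_nat (k - j) *s d) + d \<in> U" using F2 by blast
    moreover have "(a - of_nat (k - j) *s d) + d = a - of_nat (k - Suc j) *s d"
      unfolding m smul_suc by simp
    ultimately show ?case by simp
  qed
  show "a \<in> U" using down[of k] by simp
qed

theorem mainTheorem11:
  fixes \<sigma> :: "(real^'n) set" and d :: "int^'n" and f :: "'n cpoly"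
  assumes "rat_poly_cone \<sigma>" and "interior \<sigma> \<noteq> {}" and "strongly_convex \<sigma>"
    and "Hd \<sigma> d dvd f"
    and "rvec (-d) \<in> interior (dualc \<sigma>)"
  shows "\<forall>I J. monomial_ideal \<sigma> I \<and> I \<noteq> {0} \<and> delta d f ` I = I
           \<and> monomial_ideal \<sigma> J \<and> J \<noteq> {0} \<and> delta d f ` J = J \<longrightarrow> I = J"
proof (intro allI impI, elim conjE)
  fix I J assume mI: "monomial_ideal \<sigma> I" and nI: "I \<noteq> {0}" and fI: "delta d f ` I = I"
    and mJ: "monomial_ideal \<sigma> J" and nJ: "J \<noteq> {0}" and fJ: "delta d f ` J = J"
  obtain U where U: "upset \<sigma> U" "I = {p. Poly_Mapping.keys p \<subseteq> U}"
    using monomial_ideal_char[OF mI] by blast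
  obtain V where V: "upset \<sigma> V" "J = {p. Poly_Mapping.keys p \<subseteq> V}"
    using monomial_ideal_char[OF mJ] by blast
  have "U \<noteq> {}" using nI U(2) by auto
  then obtain c where c: "c \<in> U" by blast
  have "V \<noteq> {}" using nJ V(2) by auto
  then obtain c' where c': "c' \<in> V" by blast
  have "V \<subseteq> U" by (rule key_incl[OF assms(5) U(1) V(1) U(2) V(2) fI fJ c])
  moreover have "U \<subseteq> V" by (rule key_incl[OF assms(5) V(1) U(1) V(2) U(2) fJ fI c'])
  ultimately show "I = J" using U(2) V(2) by auto
qed

end
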